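(* Fix a test set $\mathbf{x}=\{x_1,\dots,x_n\}$ of size $n$ and a bounded performance metric $\Psi$. Let $\eta(x_i)=\mathbb{P}(Y=1\mid x_i)$ and let $\hat\eta(x_i)$ be estimates (computed from $m$ training samples) satisfying $\hat\eta(x_i)\xrightarrow{p}\eta(x_i)$ as $m\to\infty$. Let $\hat{\mathbb{P}}(\mathbf{y}\mid\mathbf{x})=\prod_{i=1}^n\hat\eta(x_i)^{y_i}(1-\hat\eta(x_i))^{1-y_i}$ and $\mathbb{P}(\mathbf{y}\mid\mathbf{x})=\prod_{i=1}^n\eta(x_i)^{y_i}(1-\eta(x_i))^{1-y_i}$. Let $\mathbf{s}^*\in\arg\max_{\mathbf{s}\in\{0,1\}^n}U_\Psi(\mathbf{s};\mathbb{P})$ and $\hat{\mathbf{s}}\in\arg\max_{\mathbf{s}\in\{0,1\}^n}U_\Psi(\mathbf{s};\hat{\mathbb{P}})$. Then \[U_\Psi(\mathbf{s}^*;\mathbb{P})-U_\Psi(\hat{\mathbf{s}};\mathbb{P})\xrightarrow{p}0.\]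
   Context: Labels are binary. A metric $\Psi$ is a function of the empirical confusion matrix (entries $\frac1n\sum_is_iy_i$, $\frac1n\sum_i(1-s_i)(1-y_i)$, $\frac1n\sum_is_i(1-y_i)$, $\frac1n\sum_i(1-s_i)y_i$) of predictions $\mathbf{s}\in\{0,1\}^n$ against labels $\mathbf{y}\in\{0,1\}^n$, written $\Psi(\mathbf{s},\mathbf{y})$. For a distribution $Q$ on $\{0,1\}^n$, $U_\Psi(\mathbf{s};Q)=\sum_{\mathbf{y}\in\{0,1\}^n}Q(\mathbf{y})\Psi(\mathbf{s},\mathbf{y})$. *)

theory Defs
  imports "HOL-Probability.Probability"
begin

definition bvecs :: "nat \<Rightarrow> (nat \<Rightarrow> nat) set" where
  "bvecs n = ({0..<n} \<rightarrow>\<^sub>E {0, 1})"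

text \<open>Metric evaluated on the empirical confusion matrix.  The metric Psi takes
  the four entries in the order (TP, TN, FP, FN), each normalised by 1/n.\<close>
definition metric :: "(real \<Rightarrow> real \<Rightarrow> real \<Rightarrow> real \<Rightarrow> real) \<Rightarrow> nat
    \<Rightarrow> (nat \<Rightarrow> nat) \<Rightarrow> (nat \<Rightarrow> nat) \<Rightarrow> real" where
  "metric Psi n s y =
     Psi ((\<Sum>i<n. real (s i) * real (y i)) / real n)
         ((\<Sum>i<n. (1 - real (s i)) * (1 - real (y i))) / real n)
         ((\<Sum>i<n. real (s i) * (1 - real (y i))) / real n)
         ((\<Sum>i<n. (1 - real (s i)) * real (y i)) / real n)"

definition U :: "(real \<Rightarrow> real \<Rightarrow> real \<Rightarrow> real \<Rightarrow> real) \<Rightarrow> nat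
    \<Rightarrow> (nat \<Rightarrow> nat) \<Rightarrow> ((nat \<Rightarrow> nat) \<Rightarrow> real) \<Rightarrow> real" where
  "U Psi n s Q = (\<Sum>y\<in>bvecs n. Q y * metric Psi n s y)"

definition prodP :: "nat \<Rightarrow> (nat \<Rightarrow> real) \<Rightarrow> (nat \<Rightarrow> nat) \<Rightarrow> real" where
  "prodP n p y = (\<Prod>i<n. p i ^ y i * (1 - p i) ^ (1 - y i))"

end

theory Submission
  imports Defs
begin

lemma prod_diff_bound:
  fixes a b :: "nat \<Rightarrow> real"
  assumes "\<forall>i<n. \<bar>a i\<bar> \<le> 1 \<and> \<bar>b i - a i\<bar> \<le> d" and "0 \<le> d" "d \<le> 1"
  shows "\<bar>(\<Prod>i<n. b i) - (\<Prod>i<n. a i)\<bar> \<le> (2^n - 1) * d \<and> \<bar>\<Prod>i<n. a i\<bar> \<le> 1"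
  using assms(1)
proof (induction n)
  case 0
  then show ?case by simp
next
  case (Suc n)
  then have IH: "\<bar>(\<Prod>i<n. b i) - (\<Prod>i<n. a i)\<bar> \<le> (2^n - 1) * d" "\<bar>\<Prod>i<n. a i\<bar> \<le> 1" by auto
  have an: "\<bar>a n\<bar> \<le> 1" "\<bar>b n - a n\<bar> \<le> d" using Suc.prems by auto
  have bn: "\<bar>b n\<bar> \<le> 2" using an assms(3) by linarith
  let ?B = "\<Prod>i<n. b i" and ?A = "\<Prod>i<n. a i"
  have "b n * ?B - a n * ?A = b n * (?B - ?A) + (b n - a n) * ?A" by (simp add: algebra_simps)
  then have "\<bar>b n * ?B - a n * ?A\<bar> \<le> \<bar>b n\<bar> * \<bar>?B - ?A\<bar> + \<bar>b n - a n\<bar> * \<bar>?A\<bar>"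
    by (metis abs_mult abs_triangle_ineq)
  also have "\<dots> \<le> 2 * ((2^n - 1) * d) + d * 1"
    by (intro add_mono mult_mono) (use IH an bn assms in auto)
  also have "\<dots> = (2^Suc n - 1) * d" by (simp add: algebra_simps)
  finally have 1: "\<bar>b n * ?B - a n * ?A\<bar> \<le> (2^Suc n - 1) * d" .
  have 2: "\<bar>a n * ?A\<bar> \<le> 1" using IH an by (simp add: abs_mult mult_le_one)
  show ?case using 1 2 by (simp add: mult.commute)
qed

lemma prodP_diff:
  assumes "y \<in> bvecs n" "\<forall>i<n. 0 \<le> q i \<and> q i \<le> 1" "\<forall>i<n. \<bar>p i - q i\<bar> \<le> d" "0 \<le> d" "d \<le> 1"
  shows "\<bar>prodP n p y - prodP n q y\<bar> \<le> (2^n - 1) * d"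
proof -
  have y: "\<forall>i<n. y i = 0 \<or> y i = 1" using assms(1) unfolding bvecs_def by auto
  have "\<forall>i<n. \<bar>q i ^ y i * (1 - q i) ^ (1 - y i)\<bar> \<le> 1 \<and>
     \<bar>p i ^ y i * (1 - p i) ^ (1 - y i) - q i ^ y i * (1 - q i) ^ (1 - y i)\<bar> \<le> d"
  proof (intro allI impI)
    fix i assume i: "i < n"
    show "\<bar>q i ^ y i * (1 - q i) ^ (1 - y i)\<bar> \<le> 1 \<and>
     \<bar>p i ^ y i * (1 - p i) ^ (1 - y i) - q i ^ y i * (1 - q i) ^ (1 - y i)\<bar> \<le> d"
      using y[rule_format, OF i] assms(2)[rule_format, OF i] assms(3)[rule_format, OF i] by auto
  qed
  from prod_diff_bound[OF this assms(4,5)] show ?thesis unfolding prodP_def by simp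
qed

lemma U_diff:
  assumes "\<forall>y\<in>bvecs n. \<bar>Q1 y - Q2 y\<bar> \<le> c" "\<forall>a b c d. \<bar>Psi a b c d\<bar> \<le> B"
  shows "\<bar>U Psi n s Q1 - U Psi n s Q2\<bar> \<le> real (card (bvecs n)) * (c * B)"
proof -
  have "U Psi n s Q1 - U Psi n s Q2 = (\<Sum>y\<in>bvecs n. (Q1 y - Q2 y) * metric Psi n s y)"
    unfolding U_def by (simp add: sum_subtractf algebra_simps)
  then have "\<bar>U Psi n s Q1 - U Psi n s Q2\<bar> \<le> (\<Sum>y\<in>bvecs n. \<bar>(Q1 y - Q2 y) * metric Psi n s y\<bar>)"
    by (metis sum_abs)
  also have "\<dots> \<le> (\<Sum>y\<in>bvecs n. c * B)"
  proof (rule sum_mono)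
    fix y assume "y \<in> bvecs n"
    then show "\<bar>(Q1 y - Q2 y) * metric Psi n s y\<bar> \<le> c * B"
      unfolding abs_mult using assms unfolding metric_def
      by (intro mult_mono) auto
  qed
  finally show ?thesis by simp
qed

theorem theorem2:
  fixes M :: "'a measure"
    and n :: nat
    and Psi :: "real \<Rightarrow> real \<Rightarrow> real \<Rightarrow> real \<Rightarrow> real"
    and eta :: "nat \<Rightarrow> real"
    and eta_hat :: "nat \<Rightarrow> nat \<Rightarrow> 'a \<Rightarrow> real"
    and s_star :: "nat \<Rightarrow> nat"
    and s_hat :: "nat \<Rightarrow> 'a \<Rightarrow> (nat \<Rightarrow> nat)"
  assumes "prob_space M"
    and bounded: "\<exists>B. \<forall>a b c d. \<bar>Psi a b c d\<bar> \<le> B"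
    and eta_prob: "\<forall>i<n. 0 \<le> eta i \<and> eta i \<le> 1"
    and eta_hat_meas: "\<forall>m i. i < n \<longrightarrow> eta_hat m i \<in> borel_measurable M"
    and consistent: "\<forall>i<n. \<forall>\<epsilon>>0.
        (\<lambda>m. measure M {\<omega> \<in> space M. \<bar>eta_hat m i \<omega> - eta i\<bar> > \<epsilon>}) \<longlonglongrightarrow> 0"
    and s_star_opt: "s_star \<in> bvecs n \<and>
        (\<forall>s\<in>bvecs n. U Psi n s (prodP n eta) \<le> U Psi n s_star (prodP n eta))"
    and s_hat_opt: "\<forall>m. \<forall>\<omega>\<in>space M. s_hat m \<omega> \<in> bvecs n \<and>
        (\<forall>s\<in>bvecs n. U Psi n s (prodP n (\<lambda>i. eta_hat m i \<omega>))
                       \<le> U Psi n (s_hat m \<omega>) (prodP n (\<lambda>i. eta_hat m i \<omega>)))"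
    and s_hat_meas: "\<forall>m. s_hat m \<in> measurable M (count_space UNIV)"
  shows "\<forall>\<epsilon>>0. (\<lambda>m. measure M {\<omega> \<in> space M.
            \<bar>U Psi n s_star (prodP n eta) - U Psi n (s_hat m \<omega>) (prodP n eta)\<bar> > \<epsilon>})
           \<longlonglongrightarrow> 0"
proof (intro allI impI)
  fix \<epsilon> :: real assume eps: "\<epsilon> > 0"
  interpret P: prob_space M by fact
  obtain B0 where B0: "\<forall>a b c d. \<bar>Psi a b c d\<bar> \<le> B0" using bounded by auto
  define B where "B = max B0 0"
  have B: "\<forall>a b c d. \<bar>Psi a b c d\<bar> \<le> B" "B \<ge> 0" using B0 unfolding B_def by (auto intro: le_max_iff_disj[THEN iffD2])
  define K where "K = real (card (bvecs n)) * ((2^n - 1) * B)"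
  have K0: "K \<ge> 0" unfolding K_def using B by simp
  define d where "d = min 1 (\<epsilon> / (2*K+1))"
  have d0: "d > 0" "d \<le> 1" unfolding d_def using eps K0 by auto
  have Kd: "2 * (K * d) < \<epsilon>"
  proof -
    have "K * d \<le> K * (\<epsilon> / (2*K+1))" unfolding d_def using K0 by (intro mult_left_mono) auto
    then have "2 * (K * d) \<le> 2 * K * \<epsilon> / (2*K+1)" by simp
    also have "\<dots> < \<epsilon>" using K0 eps by (simp add: field_simps)
    finally show ?thesis .
  qed
  define E where "E m = {\<omega> \<in> space M.
            \<bar>U Psi n s_star (prodP n eta) - U Psi n (s_hat m \<omega>) (prodP n eta)\<bar> > \<epsilon>}" for m
  define F where "F m i = {\<omega> \<in> space M. \<bar>eta_hat m i \<omega> - eta i\<bar> > d}" for m i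
  have Fmeas: "F m i \<in> sets M" if "i < n" for m i
    proof -
    have [measurable]: "eta_hat m i \<in> borel_measurable M" using eta_hat_meas that by auto
    show ?thesis unfolding F_def by measurable
  qed
  have sub: "E m \<subseteq> (\<Union>i<n. F m i)" for m
  proof
    fix \<omega> assume w: "\<omega> \<in> E m"
    then have sp: "\<omega> \<in> space M" unfolding E_def by auto
    show "\<omega> \<in> (\<Union>i<n. F m i)"
    proof (rule ccontr)
      assume "\<omega> \<notin> (\<Union>i<n. F m i)"
      then have cl: "\<forall>i<n. \<bar>eta_hat m i \<omega> - eta i\<bar> \<le> d" using sp unfolding F_def by (auto simp: not_less)
      let ?P = "prodP n eta" and ?Ph = "prodP n (\<lambda>i. eta_hat m i \<omega>)"
      have pd: "\<forall>y\<in>bvecs n. \<bar>?Ph y - ?P y\<bar> \<le> (2^n - 1) * d"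
        using prodP_diff[OF _ eta_prob] cl d0 by auto
      have Ud: "\<bar>U Psi n s ?Ph - U Psi n s ?P\<bar> \<le> K * d" for s
        using U_diff[OF pd B(1), of s] unfolding K_def by (simp add: algebra_simps)
      have sh: "s_hat m \<omega> \<in> bvecs n"
        "U Psi n s_star ?Ph \<le> U Psi n (s_hat m \<omega>) ?Ph"
        using s_hat_opt sp s_star_opt by auto
      have ge: "U Psi n (s_hat m \<omega>) ?P \<le> U Psi n s_star ?P" using s_star_opt sh by auto
      have "U Psi n s_star ?P - U Psi n (s_hat m \<omega>) ?P \<le> 2 * (K * d)"
        using Ud[of s_star] Ud[of "s_hat m \<omega>"] sh(2) by linarith
      then show False using w ge Kd unfolding E_def by auto
    qed
  qed
  have le: "measure M (E m) \<le> (\<Sum>i<n. measure M (F m i))" for m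
  proof -
    have "measure M (E m) \<le> measure M (\<Union>i<n. F m i)"
    proof (cases "E m \<in> sets M")
      case True
      then show ?thesis using sub Fmeas by (intro P.finite_measure_mono) auto
    next
      case False
      then show ?thesis by (simp add: measure_notin_sets)
    qed
    also have "\<dots> \<le> (\<Sum>i<n. measure M (F m i))"
      using Fmeas by (intro P.finite_measure_subadditive_finite) auto
    finally show ?thesis .
  qed
  have lim: "(\<lambda>m. \<Sum>i<n. measure M (F m i)) \<longlonglongrightarrow> 0"
    by (rule tendsto_null_sum) (use consistent d0 in \<open>auto simp: F_def\<close>)
  show "(\<lambda>m. measure M (E m)) \<longlonglongrightarrow> 0"
    by (rule tendsto_sandwich[OF _ _ tendsto_const lim]) (use le in auto)
qed

end
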